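(* Consider the FlexPD-G iterates described in the context with $\alpha,\beta>0$ and integer $T\ge1$. For any $\eta_2,\eta_3>0$ and every $k\ge0$, \[\|x^{k+1,T}-x^*\|_{P_G}^2+c_2\|x^{k+1,T}-x^{k+1,T-1}\|^2+c_3\|x^k-x^*\|^2\le\|x^{k+1,T-1}-x^*\|^2-c_1\|x^{k+1,T}-x^*\|^2+\frac{\alpha}{\beta}\|\lambda^k-\lambda^*\|^2-\frac{\alpha}{\beta}\|\lambda^{k+1}-\lambda^*\|^2+\alpha\rho(B)\|x^k-x^*\|^2,\] where $P_G=2\alpha mI-\alpha(\eta_2+\eta_3)I-\alpha\beta A'A-\alpha\rho(B)I$, $c_1=1+\alpha\rho(B)$, $c_2=1-\frac{\alpha L^2}{\eta_2}$, and $c_3=\alpha\rho(B)\big(1-\frac{\rho(B)}{\eta_3}\big)$.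
   Context: Setting: $n$ agents are connected by a connected undirected graph with edge set $\mathcal E$, $\epsilon=|\mathcal E|$. For $x\in\mathbb R^n$ let $f(x)=\sum_{i=1}^n f_i(x_i)$, where each $f_i:\mathbb R\to\mathbb R$ is twice differentiable with $m\le f_i''\le L$ for constants $0<m\le L$; $\nabla f(x)=(f_1'(x_1),\dots,f_n'(x_n))'$. $A\in\mathbb R^{\epsilon\times n}$ is the edge–node incidence matrix (null space spanned by the all-ones vector). $B\in\mathbb R^{n\times n}$ is symmetric positive semidefinite with the same null space as $A$, off-diagonal entries nonzero only on edges, and $\rho(B)<m$. $x^*$ is the unique minimizer of $f$ subject to $Ax=0$ and $\lambda^*$ a Lagrange multiplier with $\nabla f(x^* )+A'\lambda^*=0$, $Ax^*=0$, $Bx^*=0$, chosen in the column space of $A$. FlexPD-G: given $\alpha,\beta>0$, $T\ge1$, $x^0$ arbitrary, $\lambda^0=0$; for $k\ge0$: $x^{k+1,0}=x^k$; for $t=1,\dots,T$, $x^{k+1,t}=x^{k+1,t-1}-\alpha\nabla f(x^{k+1,t-1})-\alpha A'\lambda^k-\alpha Bx^k$; then $x^{k+1}=x^{k+1,T}$, $\lambda^{k+1}=\lambda^k+\beta Ax^{k+1}$. Notation: $\rho(S)$ largest eigenvalue of symmetric $S$; $\|v\|_S^2:=v'Sv$ for any symmetric $S$; $\|\cdot\|$ Euclidean norm. *)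

theory Defs
  imports "HOL-Analysis.Analysis"
begin

text \<open>Edge-node incidence matrix of a graph whose edges (type 'e) have
  an (arbitrary) orientation src e -> dst e: row e has +1 at src e, -1 at dst e.\<close>
definition incidence :: "('e \<Rightarrow> 'n) \<Rightarrow> ('e \<Rightarrow> 'n) \<Rightarrow> real^'n^'e" where
  "incidence src dst = (\<chi> e i. if i = src e then 1 else if i = dst e then -1 else 0)"

definition adjacent :: "('e \<Rightarrow> 'n) \<Rightarrow> ('e \<Rightarrow> 'n) \<Rightarrow> 'n \<Rightarrow> 'n \<Rightarrow> bool" where
  "adjacent src dst i j = (\<exists>e. (src e = i \<and> dst e = j) \<or> (src e = j \<and> dst e = i))"

definition max_eig :: "real^'n^'n \<Rightarrow> real" where
  "max_eig S = Max {\<mu>. \<exists>v. v \<noteq> 0 \<and> S *v v = \<mu> *\<^sub>R v}"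

definition qnorm2 :: "real^'n^'n \<Rightarrow> real^'n \<Rightarrow> real" where
  "qnorm2 S v = v \<bullet> (S *v v)"

definition grad :: "('n \<Rightarrow> real \<Rightarrow> real) \<Rightarrow> real^'n \<Rightarrow> real^'n" where
  "grad f' x = (\<chi> i. f' i (x $ i))"

end

theory Submission
  imports Defs
begin

lemma transp_inner: "(x::real^'m) \<bullet> (transpose A *v y) = (A *v x) \<bullet> (y::real^'k)"
  by (metis dot_lmul_matrix inner_commute transpose_matrix_vector)

lemma sym_inner: assumes "transpose B = B"
  shows "(x::real^'n) \<bullet> (B *v y) = y \<bullet> (B *v x)"
  by (metis assms transp_inner inner_commute)

lemma cont_quad: "continuous_on S (\<lambda>v::real^'n. v \<bullet> (B *v v))"
  by (intro continuous_intros continuous_on_compose2[OF matrix_vector_mult_linear_continuous_on]) auto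

lemma quad_scale: "(c *\<^sub>R a) \<bullet> (B *v (c *\<^sub>R a)) = c^2 * (a \<bullet> (B *v (a::real^'n)))"
  by (simp add: matrix_vector_mult_scaleR power2_eq_square)

lemma quad_add: assumes "transpose B = B"
  shows "(a + b) \<bullet> (B *v (a + b)) = a \<bullet> (B *v a) + 2 * (a \<bullet> (B *v b)) + b \<bullet> (B *v (b::real^'n))"
  using sym_inner[OF assms, of b a]
  by (simp add: matrix_vector_right_distrib inner_add_left inner_add_right)

lemma rayleigh:
  fixes B :: "real^'n^'n"
  assumes sym: "transpose B = B"
  shows "\<exists>v \<mu>. v \<noteq> 0 \<and> B *v v = \<mu> *\<^sub>R v \<and> (\<forall>a. a \<bullet> (B *v a) \<le> \<mu> * (a \<bullet> a))"
proof -
  let ?S = "sphere (0::real^'n) 1"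
  have ne: "?S \<noteq> {}"
    using vector_choose_size[of 1] by (auto simp: dist_norm)
  obtain v where v: "v \<in> ?S" and vmax: "\<And>y. y \<in> ?S \<Longrightarrow> y \<bullet> (B *v y) \<le> v \<bullet> (B *v v)"
    using continuous_attains_sup[OF compact_sphere ne cont_quad] by blast
  define \<mu> where "\<mu> = v \<bullet> (B *v v)"
  have nv: "norm v = 1" using v by (simp add: dist_norm)
  hence vv: "v \<bullet> v = 1" by (simp add: dot_square_norm)
  have ray: "a \<bullet> (B *v a) \<le> \<mu> * (a \<bullet> a)" for a
  proof (cases "a = 0")
    case True then show ?thesis by simp
  next
    case False
    let ?u = "(1 / norm a) *\<^sub>R a"
    have "?u \<in> ?S" using False by (simp add: dist_norm)
    hence "?u \<bullet> (B *v ?u) \<le> \<mu>" using vmax \<mu>_def by blast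
    hence "(1/norm a)^2 * (a \<bullet> (B *v a)) \<le> \<mu>" by (simp only: quad_scale)
    hence "a \<bullet> (B *v a) \<le> \<mu> * (norm a)^2" using False
      by (simp add: field_simps power2_eq_square)
    thus ?thesis by (simp add: dot_square_norm)
  qed
  define w where "w = B *v v - \<mu> *\<^sub>R v"
  have wv: "w \<bullet> (B *v v) - \<mu> * (w \<bullet> v) = w \<bullet> w"
    by (simp add: w_def inner_diff_right)
  have "w = 0"
  proof (rule ccontr)
    assume "w \<noteq> 0"
    hence N: "w \<bullet> w > 0" by simp
    define c where "c = w \<bullet> (B *v w) - \<mu> * (w \<bullet> w)"
    have c0: "c \<le> 0" using ray[of w] by (simp add: c_def)
    define t where "t = (w \<bullet> w) / (\<bar>c\<bar> + 1)"
    have t0: "t > 0" using N by (simp add: t_def)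
    have "(v + t *\<^sub>R w) \<bullet> (B *v (v + t *\<^sub>R w)) \<le> \<mu> * ((v + t *\<^sub>R w) \<bullet> (v + t *\<^sub>R w))"
      by (rule ray)
    hence "v \<bullet> (B *v v) + 2 * (t * (w \<bullet> (B *v v))) + t^2 * (w \<bullet> (B *v w)) \<le>
           \<mu> * (v \<bullet> v + 2 * t * (w \<bullet> v) + t^2 * (w \<bullet> w))"
      using sym_inner[OF sym, of v w]
      by (simp add: quad_add[OF sym] quad_scale inner_add_left inner_add_right
             matrix_vector_mult_scaleR power2_eq_square inner_commute algebra_simps)
    hence "2 * t * (w \<bullet> w) + t^2 * c \<le> 0"
      using wv vv unfolding c_def \<mu>_def[symmetric] by (simp add: algebra_simps)
    hence "t * (2 * (w \<bullet> w) + t * c) \<le> 0" by (simp add: power2_eq_square algebra_simps)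
    hence "2 * (w \<bullet> w) + t * c \<le> 0" using t0 by (simp add: mult_le_0_iff)
    moreover have "t * \<bar>c\<bar> \<le> w \<bullet> w"
      using N by (simp add: t_def field_simps)
    moreover have "t * \<bar>c\<bar> = -(t * c)" using c0 by simp
    ultimately show False using N by linarith
  qed
  hence "B *v v = \<mu> *\<^sub>R v" by (simp add: w_def)
  moreover have "v \<noteq> 0" using nv by auto
  ultimately show ?thesis using ray by blast
qed


lemma eig_finite:
  fixes B :: "real^'n^'n"
  assumes sym: "transpose B = B"
  shows "finite {\<mu>. \<exists>v. v \<noteq> 0 \<and> B *v v = \<mu> *\<^sub>R v}"
proof -
  let ?E = "{\<mu>. \<exists>v. v \<noteq> 0 \<and> B *v v = \<mu> *\<^sub>R v}"
  define V where "V \<mu> = (SOME v. v \<noteq> 0 \<and> B *v v = \<mu> *\<^sub>R v)" for \<mu>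
  have V: "V \<mu> \<noteq> 0 \<and> B *v V \<mu> = \<mu> *\<^sub>R V \<mu>" if "\<mu> \<in> ?E" for \<mu>
  proof -
    have "\<exists>v. v \<noteq> 0 \<and> B *v v = \<mu> *\<^sub>R v" using that by simp
    thus ?thesis unfolding V_def by (rule someI_ex)
  qed
  have inj: "inj_on V ?E"
  proof (rule inj_onI)
    fix x y assume x: "x \<in> ?E" and y: "y \<in> ?E" and e: "V x = V y"
    have hx: "B *v V x = x *\<^sub>R V x" using V[OF x] by (rule conjunct2)
    have hy: "B *v V y = y *\<^sub>R V y" using V[OF y] by (rule conjunct2)
    have nz: "V x \<noteq> 0" using V[OF x] by (rule conjunct1)
    have "x *\<^sub>R V x = y *\<^sub>R V x" using hx hy e by metis
    thus "x = y" using nz scaleR_cancel_right by blast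
  qed
  have orth: "pairwise orthogonal (V ` ?E)"
  unfolding pairwise_def
  proof (intro ballI impI)
    fix p q assume "p \<in> V ` ?E" "q \<in> V ` ?E" "p \<noteq> q"
    then obtain x y where x: "x \<in> ?E" and y: "y \<in> ?E" and pq: "p = V x" "q = V y" and ne: "V x \<noteq> V y"
      by blast
    have xy: "x \<noteq> y" using ne by blast
    have "V x \<bullet> (B *v V y) = V y \<bullet> (B *v V x)" by (rule sym_inner[OF sym])
    moreover have "B *v V x = x *\<^sub>R V x" using V[OF x] by (rule conjunct2)
    moreover have "B *v V y = y *\<^sub>R V y" using V[OF y] by (rule conjunct2)
    ultimately have "y * (V x \<bullet> V y) = x * (V x \<bullet> V y)" by (simp add: inner_commute)
    hence "V x \<bullet> V y = 0" using xy by simp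
    thus "orthogonal p q" by (simp add: orthogonal_def pq)
  qed
  have "0 \<notin> V ` ?E"
  proof
    assume "0 \<in> V ` ?E"
    then obtain \<mu> where mu: "\<mu> \<in> ?E" and z: "0 = V \<mu>" by blast
    have "V \<mu> \<noteq> 0" using V[OF mu] by (rule conjunct1)
    thus False using z by simp
  qed
  hence "independent (V ` ?E)" by (rule pairwise_orthogonal_independent[OF orth])
  hence "finite (V ` ?E)" by (rule independent_bound[THEN conjunct1])
  thus ?thesis by (rule finite_imageD[OF _ inj])
qed

lemma max_eig_bound:
  fixes B :: "real^'n^'n"
  assumes sym: "transpose B = B" and psd: "\<And>v. 0 \<le> v \<bullet> (B *v v)"
  shows "0 \<le> max_eig B" "\<And>a. a \<bullet> (B *v a) \<le> max_eig B * (a \<bullet> a)"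
proof -
  obtain v \<mu> where v: "v \<noteq> 0" "B *v v = \<mu> *\<^sub>R v" and r: "\<And>a. a \<bullet> (B *v a) \<le> \<mu> * (a \<bullet> a)"
    using rayleigh[OF sym] by blast
  have "\<mu> \<le> max_eig B" unfolding max_eig_def
    using eig_finite[OF sym] v by (intro Max_ge) auto
  moreover have "0 \<le> \<mu>"
  proof -
    have "0 \<le> v \<bullet> (B *v v)" by (rule psd)
    also have "\<dots> = \<mu> * (v \<bullet> v)" using v by simp
    finally have "0 \<le> \<mu> * (v \<bullet> v)" .
    moreover have "v \<bullet> v > 0" using v by simp
    ultimately show ?thesis by (simp add: zero_le_mult_iff)
  qed
  ultimately show "0 \<le> max_eig B" by simp
  fix a :: "real^'n"
  have "0 \<le> a \<bullet> a" by simp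
  thus "a \<bullet> (B *v a) \<le> max_eig B * (a \<bullet> a)" using r[of a] \<open>\<mu> \<le> max_eig B\<close>
    by (meson mult_right_mono order_trans)
qed

lemma cross_bound:
  fixes B :: "real^'n^'n"
  assumes sym: "transpose B = B" and psd: "\<And>v. 0 \<le> v \<bullet> (B *v v)"
    and r0: "0 \<le> \<rho>" and rb: "\<And>a. a \<bullet> (B *v a) \<le> \<rho> * (a \<bullet> a)" and eta: "0 < \<eta>"
  shows "- 2 * (a \<bullet> (B *v b)) \<le> \<eta> * (a \<bullet> a) + \<rho>^2 / \<eta> * (b \<bullet> b)"
proof -
  have gen: "- 2 * (a \<bullet> (B *v b)) \<le> s * (a \<bullet> (B *v a)) + (b \<bullet> (B *v b)) / s" if s: "s > 0" for s
  proof -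
    have "0 \<le> (s *\<^sub>R a + b) \<bullet> (B *v (s *\<^sub>R a + b))" by (rule psd)
    also have "\<dots> = s^2 * (a \<bullet> (B *v a)) + 2 * (s * (a \<bullet> (B *v b))) + b \<bullet> (B *v b)"
      by (simp add: quad_add[OF sym] quad_scale matrix_vector_mult_scaleR power2_eq_square)
    also have "\<dots> = s * (s * (a \<bullet> (B *v a)) + 2 * (a \<bullet> (B *v b)) + (b \<bullet> (B *v b)) / s)"
      using s by (simp add: field_simps power2_eq_square)
    finally have "0 \<le> s * (s * (a \<bullet> (B *v a)) + 2 * (a \<bullet> (B *v b)) + (b \<bullet> (B *v b)) / s)" .
    hence "0 \<le> s * (a \<bullet> (B *v a)) + 2 * (a \<bullet> (B *v b)) + (b \<bullet> (B *v b)) / s"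
      using s by (simp add: zero_le_mult_iff)
    thus ?thesis by linarith
  qed
  have aa: "0 \<le> a \<bullet> a" "0 \<le> b \<bullet> b" by simp_all
  show ?thesis
  proof (cases "\<rho> = 0")
    case True
    have "- 2 * (a \<bullet> (B *v b)) \<le> 1 * (a \<bullet> (B *v a)) + (b \<bullet> (B *v b)) / 1" by (rule gen) simp
    also have "\<dots> \<le> 0" using rb[of a] rb[of b] True by simp
    finally have "- 2 * (a \<bullet> (B *v b)) \<le> 0" .
    moreover have "0 \<le> \<eta> * (a \<bullet> a)" using aa eta by simp
    ultimately show ?thesis using True by simp
  next
    case False
    hence rp: "\<rho> > 0" using r0 by simp
    define s where "s = \<eta> / \<rho>"
    have sp: "s > 0" using rp eta by (simp add: s_def)
    have "- 2 * (a \<bullet> (B *v b)) \<le> s * (a \<bullet> (B *v a)) + (b \<bullet> (B *v b)) / s" by (rule gen[OF sp])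
    also have "\<dots> \<le> s * (\<rho> * (a \<bullet> a)) + (\<rho> * (b \<bullet> b)) / s"
      using rb[of a] rb[of b] sp by (intro add_mono mult_left_mono divide_right_mono) auto
    also have "\<dots> = \<eta> * (a \<bullet> a) + \<rho>^2 / \<eta> * (b \<bullet> b)"
      using rp eta by (simp add: s_def field_simps power2_eq_square)
    finally show ?thesis .
  qed
qed


lemma mvt_ex:
  assumes d: "\<And>y. (g has_real_derivative g' y) (at y)"
  shows "\<exists>\<xi>. g p - g q = g' \<xi> * (p - (q::real))"
proof (cases p q rule: linorder_cases)
  case less
  then obtain z where "g q - g p = (q - p) * g' z" using MVT2[of p q g g'] d by blast
  then show ?thesis by (intro exI[of _ z]) (simp add: algebra_simps)
next
  case equal then show ?thesis by simp
next
  case greater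
  then obtain z where "g p - g q = (p - q) * g' z" using MVT2[of q p g g'] d by blast
  then show ?thesis by (intro exI[of _ z]) (simp add: algebra_simps)
qed

lemma grad_mono:
  assumes d2: "\<And>i y. (f' i has_real_derivative f'' i y) (at y)"
    and curv: "\<And>i y. m \<le> f'' i y \<and> f'' i y \<le> L"
  shows "m * ((y - x) \<bullet> (y - x)) \<le> (y - x) \<bullet> (grad f' y - grad f' (x::real^'n))"
proof -
  have c: "m * ((y$i - x$i) * (y$i - x$i)) \<le> (y$i - x$i) * (f' i (y$i) - f' i (x$i))" for i
  proof -
    obtain \<xi> where e: "f' i (y$i) - f' i (x$i) = f'' i \<xi> * (y$i - x$i)"
      using mvt_ex[OF d2[of i]] by blast
    have "m * ((y$i - x$i) * (y$i - x$i)) \<le> f'' i \<xi> * ((y$i - x$i) * (y$i - x$i))"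
      using curv[of i \<xi>] by (intro mult_right_mono) auto
    moreover have "(y$i - x$i) * (f'' i \<xi> * (y$i - x$i)) = f'' i \<xi> * ((y$i - x$i) * (y$i - x$i))"
      by (simp only: ac_simps)
    ultimately show ?thesis unfolding e by linarith
  qed
  show ?thesis
    unfolding inner_vec_def sum_distrib_left
    by (intro sum_mono) (simp add: grad_def c)
qed

lemma grad_lip:
  assumes d2: "\<And>i y. (f' i has_real_derivative f'' i y) (at y)"
    and curv: "\<And>i y. m \<le> f'' i y \<and> f'' i y \<le> L" and m0: "0 < m"
  shows "(grad f' z - grad f' y) \<bullet> (grad f' z - grad f' y) \<le> L^2 * ((z - y) \<bullet> (z - (y::real^'n)))"
proof -
  have c: "(f' i (z$i) - f' i (y$i)) * (f' i (z$i) - f' i (y$i)) \<le> L^2 * ((z$i - y$i) * (z$i - y$i))" for i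
  proof -
    obtain \<xi> where e: "f' i (z$i) - f' i (y$i) = f'' i \<xi> * (z$i - y$i)"
      using mvt_ex[OF d2[of i]] by blast
    have "(f'' i \<xi>)^2 \<le> L^2" using curv[of i \<xi>] m0 by (intro power_mono) auto
    hence "(f'' i \<xi>)^2 * ((z$i - y$i) * (z$i - y$i)) \<le> L^2 * ((z$i - y$i) * (z$i - y$i))"
      by (intro mult_right_mono) auto
    moreover have "(f'' i \<xi> * (z$i - y$i)) * (f'' i \<xi> * (z$i - y$i)) = (f'' i \<xi>)^2 * ((z$i - y$i) * (z$i - y$i))"
      by (simp only: ac_simps power2_eq_square)
    ultimately show ?thesis unfolding e by linarith
  qed
  show ?thesis
    unfolding inner_vec_def sum_distrib_left
    by (intro sum_mono) (simp add: grad_def c)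
qed

lemma arith:
  fixes \<alpha> \<beta> \<eta>2 \<eta>3 m L \<rho> aa dd bb AA ll aG Al aBb :: real
  assumes "0 < \<alpha>" "0 < \<beta>" "0 < \<eta>2" "0 < \<eta>3"
   and GBa: "\<alpha> * (2*aG) \<ge> \<alpha> * ((2*m - \<eta>2)*aa - L^2*dd/\<eta>2)"
   and BBa: "\<alpha> * (-2*aBb) \<le> \<alpha> * (\<eta>3*aa + \<rho>^2/\<eta>3*bb)"
  shows "(2*\<alpha>*m - \<alpha>*(\<eta>2+\<eta>3) - \<alpha>*\<rho>)*aa - (\<alpha>*\<beta>)*AA + (1 - \<alpha>*L^2/\<eta>2)*dd + \<alpha>*\<rho>*(1-\<rho>/\<eta>3)*bb
     \<le> (aa + 2*(\<alpha>*aG + \<alpha>*Al + \<alpha>*aBb) + dd) - (1+\<alpha>*\<rho>)*aa + \<alpha>/\<beta>*ll - (\<alpha>/\<beta>*ll + 2*\<alpha>*Al + \<alpha>*\<beta>*AA) + \<alpha>*\<rho>*bb"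
proof -
  have e1: "\<alpha> * ((2*m - \<eta>2)*aa - L^2*dd/\<eta>2) = 2*\<alpha>*m*aa - \<alpha>*\<eta>2*aa - \<alpha>*L^2/\<eta>2*dd" by (simp add: algebra_simps)
  have e2: "\<alpha> * (\<eta>3*aa + \<rho>^2/\<eta>3*bb) = \<alpha>*\<eta>3*aa + \<alpha>*\<rho>*(\<rho>/\<eta>3)*bb" by (simp add: algebra_simps power2_eq_square)
  show ?thesis using GBa BBa unfolding e1 e2 by (simp add: algebra_simps)
qed

lemma inner_sq_add: "(p + q) \<bullet> (p + q) = p \<bullet> p + 2 * (p \<bullet> q) + q \<bullet> (q::'a::real_inner)"
  by (simp add: inner_add_left inner_add_right inner_commute)

lemma young:
  assumes "0 < (\<eta>::real)"
  shows "- 2 * (a \<bullet> g) \<le> \<eta> * (a \<bullet> a) + (g \<bullet> g) / \<eta>"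
proof -
  have "0 \<le> (\<eta> *\<^sub>R a + g) \<bullet> (\<eta> *\<^sub>R a + g)" by simp
  also have "\<dots> = \<eta> * (\<eta> * (a \<bullet> a) + 2 * (a \<bullet> g) + (g \<bullet> g) / \<eta>)"
    using assms by (simp add: inner_add_left inner_add_right inner_commute field_simps power2_eq_square)
  finally have "0 \<le> \<eta> * (a \<bullet> a) + 2 * (a \<bullet> g) + (g \<bullet> g) / \<eta>"
    using assms by (simp add: zero_le_mult_iff)
  thus ?thesis by linarith
qed

theorem lemma3p10:
  fixes f f' f'' :: "'n::finite \<Rightarrow> real \<Rightarrow> real"
    and src dst :: "'e::finite \<Rightarrow> 'n"
    and B :: "real^'n^'n"
    and m L \<alpha> \<beta> \<eta>\<^sub>2 \<eta>\<^sub>3 :: real and T :: nat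
    and xs :: "real^'n" and ls :: "real^'e"
    and x :: "nat \<Rightarrow> real^'n" and xin :: "nat \<Rightarrow> nat \<Rightarrow> real^'n"
    and lam :: "nat \<Rightarrow> real^'e"
  defines "A \<equiv> incidence src dst"
  assumes simple: "\<And>e. src e \<noteq> dst e" "inj (\<lambda>e. {src e, dst e})"
    and connected: "\<And>i j. (adjacent src dst)\<^sup>*\<^sup>* i j"
    and d1: "\<And>i y. (f i has_real_derivative f' i y) (at y)"
    and d2: "\<And>i y. (f' i has_real_derivative f'' i y) (at y)"
    and m_pos: "0 < m" and m_le_L: "m \<le> L"
    and curv: "\<And>i y. m \<le> f'' i y \<and> f'' i y \<le> L"
    and B_sym: "transpose B = B"
    and B_psd: "\<And>v. 0 \<le> v \<bullet> (B *v v)"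
    and B_null: "{v. B *v v = 0} = {v. A *v v = 0}"
    and B_sparse: "\<And>i j. i \<noteq> j \<Longrightarrow> B $ i $ j \<noteq> 0 \<Longrightarrow> adjacent src dst i j"
    and rho_lt: "max_eig B < m"
    and xs_feas: "A *v xs = 0"
    and xs_min: "\<And>y. A *v y = 0 \<Longrightarrow> (\<Sum>i\<in>UNIV. f i (xs $ i)) \<le> (\<Sum>i\<in>UNIV. f i (y $ i))"
    and kkt: "grad f' xs + transpose A *v ls = 0"
    and B_xs: "B *v xs = 0"
    and ls_range: "ls \<in> range (\<lambda>y. A *v y)"
    and \<alpha>_pos: "0 < \<alpha>" and \<beta>_pos: "0 < \<beta>" and T_ge: "1 \<le> T"
    and \<eta>_pos: "0 < \<eta>\<^sub>2" "0 < \<eta>\<^sub>3"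
    and lam0: "lam 0 = 0"
    and inner0: "\<And>k. xin (Suc k) 0 = x k"
    and inner_step: "\<And>k t. 1 \<le> t \<Longrightarrow> t \<le> T \<Longrightarrow>
        xin (Suc k) t = xin (Suc k) (t - 1) - \<alpha> *\<^sub>R grad f' (xin (Suc k) (t - 1))
                        - \<alpha> *\<^sub>R (transpose A *v lam k) - \<alpha> *\<^sub>R (B *v x k)"
    and x_step: "\<And>k. x (Suc k) = xin (Suc k) T"
    and lam_step: "\<And>k. lam (Suc k) = lam k + \<beta> *\<^sub>R (A *v x (Suc k))"
  shows
    "let \<rho> = max_eig B;
         P = (2 * \<alpha> * m - \<alpha> * (\<eta>\<^sub>2 + \<eta>\<^sub>3) - \<alpha> * \<rho>) *\<^sub>R mat 1 - (\<alpha> * \<beta>) *\<^sub>R (transpose A ** A);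
         c1 = 1 + \<alpha> * \<rho>;
         c2 = 1 - \<alpha> * L\<^sup>2 / \<eta>\<^sub>2;
         c3 = \<alpha> * \<rho> * (1 - \<rho> / \<eta>\<^sub>3)
     in qnorm2 P (xin (Suc k) T - xs) + c2 * (norm (xin (Suc k) T - xin (Suc k) (T - 1)))\<^sup>2
          + c3 * (norm (x k - xs))\<^sup>2
        \<le> (norm (xin (Suc k) (T - 1) - xs))\<^sup>2 - c1 * (norm (xin (Suc k) T - xs))\<^sup>2
          + \<alpha> / \<beta> * (norm (lam k - ls))\<^sup>2 - \<alpha> / \<beta> * (norm (lam (Suc k) - ls))\<^sup>2
          + \<alpha> * \<rho> * (norm (x k - xs))\<^sup>2"
proof -
  define \<rho> where "\<rho> = max_eig B"
  have r0: "0 \<le> \<rho>" and rb: "\<And>a. a \<bullet> (B *v a) \<le> \<rho> * (a \<bullet> a)"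
    using max_eig_bound[OF B_sym B_psd] unfolding \<rho>_def by auto
  define y where "y = xin (Suc k) T"
  define z where "z = xin (Suc k) (T - 1)"
  define u where "u = x k"
  define a where "a = y - xs"
  define d where "d = z - y"
  define b where "b = u - xs"
  define G where "G = grad f' z - grad f' xs"
  define l where "l = lam k - ls"
  define Aa where "Aa = A *v a"
  have step: "y = z - \<alpha> *\<^sub>R grad f' z - \<alpha> *\<^sub>R (transpose A *v lam k) - \<alpha> *\<^sub>R (B *v u)"
    unfolding y_def z_def u_def using inner_step[of T k] T_ge by simp
  have gxs: "grad f' xs = - (transpose A *v ls)" using kkt by (simp add: eq_neg_iff_add_eq_0)
  have t1: "transpose A *v l = transpose A *v lam k - transpose A *v ls"
    by (simp only: l_def matrix_vector_mult_diff_distrib)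
  have t2: "B *v b = B *v u" by (simp only: b_def matrix_vector_mult_diff_distrib B_xs diff_zero)
  have t3: "G = grad f' z + transpose A *v ls" by (simp only: G_def gxs diff_minus_eq_add)
  have dform: "d = \<alpha> *\<^sub>R G + \<alpha> *\<^sub>R (transpose A *v l) + \<alpha> *\<^sub>R (B *v b)"
    unfolding t1 t2 t3 d_def
    by (subst step) (simp only: scaleR_right_distrib scaleR_right_diff_distrib algebra_simps)
  have t4: "Aa = A *v y" by (simp add: Aa_def a_def matrix_vector_mult_diff_distrib xs_feas)
  have lam1: "lam (Suc k) - ls = l + \<beta> *\<^sub>R Aa"
    unfolding t4 l_def lam_step x_step y_def by (simp only: algebra_simps)
  have zx: "z - xs = a + d" by (simp add: a_def d_def)
  have E1: "(z - xs) \<bullet> (z - xs) = a \<bullet> a + 2 * (a \<bullet> d) + d \<bullet> d"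
    unfolding zx by (rule inner_sq_add)
  have E2: "a \<bullet> d = \<alpha> * (a \<bullet> G) + \<alpha> * (Aa \<bullet> l) + \<alpha> * (a \<bullet> (B *v b))"
    unfolding dform Aa_def inner_add_right inner_scaleR_right transp_inner ..
  have E3: "(lam (Suc k) - ls) \<bullet> (lam (Suc k) - ls) = l \<bullet> l + 2 * \<beta> * (Aa \<bullet> l) + \<beta>^2 * (Aa \<bullet> Aa)"
    unfolding lam1 inner_sq_add by (simp add: inner_commute power2_eq_square)
  have E4: "qnorm2 ((2 * \<alpha> * m - \<alpha> * (\<eta>\<^sub>2 + \<eta>\<^sub>3) - \<alpha> * \<rho>) *\<^sub>R mat 1 - (\<alpha> * \<beta>) *\<^sub>R (transpose A ** A)) a
      = (2 * \<alpha> * m - \<alpha> * (\<eta>\<^sub>2 + \<eta>\<^sub>3) - \<alpha> * \<rho>) * (a \<bullet> a) - (\<alpha> * \<beta>) * (Aa \<bullet> Aa)"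
  proof -
    let ?c = "2 * \<alpha> * m - \<alpha> * (\<eta>\<^sub>2 + \<eta>\<^sub>3) - \<alpha> * \<rho>"
    have "(?c *\<^sub>R mat 1 - (\<alpha> * \<beta>) *\<^sub>R (transpose A ** A)) *v a
        = ?c *\<^sub>R a - (\<alpha> * \<beta>) *\<^sub>R (transpose A *v Aa)"
      unfolding Aa_def by (simp only: matrix_vector_mult_diff_rdistrib scaleR_matrix_vector_assoc[symmetric]
          matrix_vector_mul_assoc[symmetric] matrix_vector_mul_lid)
    hence "qnorm2 (?c *\<^sub>R mat 1 - (\<alpha> * \<beta>) *\<^sub>R (transpose A ** A)) a
        = ?c * (a \<bullet> a) - (\<alpha> * \<beta>) * (a \<bullet> (transpose A *v Aa))"
      unfolding qnorm2_def by (simp only: inner_diff_right inner_scaleR_right)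
    thus ?thesis unfolding transp_inner Aa_def[symmetric] .
  qed
  have gm: "m * (a \<bullet> a) \<le> a \<bullet> (grad f' y - grad f' xs)"
    unfolding a_def by (rule grad_mono[OF d2 curv])
  have gl: "(grad f' z - grad f' y) \<bullet> (grad f' z - grad f' y) \<le> L^2 * (d \<bullet> d)"
    unfolding d_def by (rule grad_lip[OF d2 curv m_pos])
  have yg: "- 2 * (a \<bullet> (grad f' z - grad f' y)) \<le> \<eta>\<^sub>2 * (a \<bullet> a)
      + ((grad f' z - grad f' y) \<bullet> (grad f' z - grad f' y)) / \<eta>\<^sub>2"
    by (rule young[OF \<eta>_pos(1)])
  have "((grad f' z - grad f' y) \<bullet> (grad f' z - grad f' y)) / \<eta>\<^sub>2 \<le> L^2 * (d \<bullet> d) / \<eta>\<^sub>2"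
    using gl \<eta>_pos by (simp add: divide_right_mono)
  moreover have "a \<bullet> G = a \<bullet> (grad f' y - grad f' xs) + a \<bullet> (grad f' z - grad f' y)"
    unfolding G_def by (simp add: inner_diff_right)
  ultimately have GB: "2 * (a \<bullet> G) \<ge> (2 * m - \<eta>\<^sub>2) * (a \<bullet> a) - L^2 * (d \<bullet> d) / \<eta>\<^sub>2"
    using gm yg by (simp add: algebra_simps)
  have BB: "- 2 * (a \<bullet> (B *v b)) \<le> \<eta>\<^sub>3 * (a \<bullet> a) + \<rho>^2 / \<eta>\<^sub>3 * (b \<bullet> b)"
    by (rule cross_bound[OF B_sym B_psd r0 rb \<eta>_pos(2)])
  have GBa: "\<alpha> * (2 * (a \<bullet> G)) \<ge> \<alpha> * ((2 * m - \<eta>\<^sub>2) * (a \<bullet> a) - L^2 * (d \<bullet> d) / \<eta>\<^sub>2)"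
    using GB \<alpha>_pos by (intro mult_left_mono) auto
  have BBa: "\<alpha> * (- 2 * (a \<bullet> (B *v b))) \<le> \<alpha> * (\<eta>\<^sub>3 * (a \<bullet> a) + \<rho>^2 / \<eta>\<^sub>3 * (b \<bullet> b))"
    using BB \<alpha>_pos by (intro mult_left_mono) auto
  have lamterm: "\<alpha> / \<beta> * ((lam (Suc k) - ls) \<bullet> (lam (Suc k) - ls))
      = \<alpha> / \<beta> * (l \<bullet> l) + 2 * \<alpha> * (Aa \<bullet> l) + \<alpha> * \<beta> * (Aa \<bullet> Aa)"
    unfolding E3 using \<beta>_pos by (simp add: field_simps power2_eq_square)
  have main: "(2 * \<alpha> * m - \<alpha> * (\<eta>\<^sub>2 + \<eta>\<^sub>3) - \<alpha> * \<rho>) * (a \<bullet> a) - (\<alpha> * \<beta>) * (Aa \<bullet> Aa)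
       + (1 - \<alpha> * L\<^sup>2 / \<eta>\<^sub>2) * (d \<bullet> d) + \<alpha> * \<rho> * (1 - \<rho> / \<eta>\<^sub>3) * (b \<bullet> b)
     \<le> (z - xs) \<bullet> (z - xs) - (1 + \<alpha> * \<rho>) * (a \<bullet> a)
       + \<alpha> / \<beta> * (l \<bullet> l) - \<alpha> / \<beta> * ((lam (Suc k) - ls) \<bullet> (lam (Suc k) - ls))
       + \<alpha> * \<rho> * (b \<bullet> b)"
    unfolding lamterm E1 E2 by (rule arith[OF \<alpha>_pos \<beta>_pos \<eta>_pos GBa BBa])
  have n1: "(norm (xin (Suc k) T - xs))\<^sup>2 = a \<bullet> a" by (simp add: power2_norm_eq_inner a_def y_def)
  have n2: "(norm (xin (Suc k) T - xin (Suc k) (T - 1)))\<^sup>2 = d \<bullet> d"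
  proof -
    have "xin (Suc k) T - xin (Suc k) (T - 1) = - d" by (simp add: d_def y_def z_def)
    thus ?thesis by (simp add: power2_norm_eq_inner)
  qed
  have n3: "(norm (x k - xs))\<^sup>2 = b \<bullet> b" by (simp add: power2_norm_eq_inner b_def u_def)
  have n4: "(norm (xin (Suc k) (T - 1) - xs))\<^sup>2 = (z - xs) \<bullet> (z - xs)" by (simp add: power2_norm_eq_inner z_def)
  have n5: "(norm (lam k - ls))\<^sup>2 = l \<bullet> l" by (simp add: power2_norm_eq_inner l_def)
  have n6: "(norm (lam (Suc k) - ls))\<^sup>2 = (lam (Suc k) - ls) \<bullet> (lam (Suc k) - ls)" by (simp add: power2_norm_eq_inner)
  have E4': "qnorm2 ((2 * \<alpha> * m - \<alpha> * (\<eta>\<^sub>2 + \<eta>\<^sub>3) - \<alpha> * \<rho>) *\<^sub>R mat 1 - (\<alpha> * \<beta>) *\<^sub>R (transpose A ** A)) (xin (Suc k) T - xs)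
      = (2 * \<alpha> * m - \<alpha> * (\<eta>\<^sub>2 + \<eta>\<^sub>3) - \<alpha> * \<rho>) * (a \<bullet> a) - (\<alpha> * \<beta>) * (Aa \<bullet> Aa)"
    using E4 by (simp only: a_def y_def)
  show ?thesis
    unfolding Let_def \<rho>_def[symmetric] E4' n1 n2 n3 n4 n5 n6
    using main by linarith
qed

end
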